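(* (i) A legal abstract path has weight $2$ if and only if it has the form Ia or the form Ib, where: form Ia means it consists of exactly two nodes, both interior, joined by one arrow; form Ib means it has exactly one boundary node $v$ and every other node is an interior node adjacent to $v$. (ii) A boundary abstract path has length $2$ if and only if it has the form II, i.e. consists of exactly two boundary nodes joined by one arrow.
   Context: $\mathbb F=\{0,1\}$, $\mathbb N=\{0,1,2,\dots\}$. Abstract vertex types: $o$ (interior), $u$ (unstable), $s$ (stable). An abstract edge is $\varepsilon=(\mu,(o_1,u_1,s_1),(o_2,u_2,s_2))\in\mathbb F\times\mathbb N^3\times\mathbb N^3$ with: if $\mu=0$ then $s_1=u_2=0$; if $\mu=1$ then $o_1=o_2=0$ (interior if $\mu=0$, boundary if $\mu=1$). Weight: $w(\varepsilon)=1$ if $\mu=0$, $2-s_1-u_2$ if $\mu=1$. An abstract path $\tau=(T,\tau,\sigma)$: a non-empty finite directed tree $T=(V,E)$ (nodes, arrows), $\tau:V\to$ abstract edges, $\sigma:E\to\{o,u,s\}$, such that for each node $v$ and type $X$, $X_1(v)\ge|\{e:t(e)=v,\sigma(e)=X\}|$ and $X_2(v)\ge|\{e:s(e)=v,\sigma(e)=X\}|$, with $X_i(v)$ the entries of $\tau(v)$. Ends: $X_1(\tau)=\sum_vX_1(v)-|\sigma^{-1}(X)|$, $X_2(\tau)=\sum_vX_2(v)-|\sigma^{-1}(X)|$. A node is interior or boundary according to $\mu(v)$. $\tau$ is legal if $s_1(\tau)=u_2(\tau)=0$; it is a boundary path if all nodes are boundary. Length = number of nodes; weight $w(\tau)=\sum_vw(\tau(v))$.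 *)

theory Defs
  imports Main
begin

text \<open>Abstract vertex types: o (interior), u (unstable), s (stable).\<close>
datatype vtype = TyO | TyU | TyS

text \<open>Abstract edge (mu, (o1,u1,s1), (o2,u2,s2)); mu = 1 is encoded as amu = True.\<close>
record aedge =
  amu :: bool
  ao1 :: nat
  au1 :: nat
  as1 :: nat
  ao2 :: nat
  au2 :: nat
  as2 :: nat

definition valid_aedge :: "aedge \<Rightarrow> bool" where
  "valid_aedge \<epsilon> \<longleftrightarrow>
     (\<not> amu \<epsilon> \<longrightarrow> as1 \<epsilon> = 0 \<and> au2 \<epsilon> = 0) \<and>
     (amu \<epsilon> \<longrightarrow> ao1 \<epsilon> = 0 \<and> ao2 \<epsilon> = 0)"

definition aedge_weight :: "aedge \<Rightarrow> int" where
  "aedge_weight \<epsilon> = (if amu \<epsilon> then 2 - int (as1 \<epsilon>) - int (au2 \<epsilon>) else 1)"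

fun X1 :: "aedge \<Rightarrow> vtype \<Rightarrow> nat" where
  "X1 \<epsilon> TyO = ao1 \<epsilon>" | "X1 \<epsilon> TyU = au1 \<epsilon>" | "X1 \<epsilon> TyS = as1 \<epsilon>"

fun X2 :: "aedge \<Rightarrow> vtype \<Rightarrow> nat" where
  "X2 \<epsilon> TyO = ao2 \<epsilon>" | "X2 \<epsilon> TyU = au2 \<epsilon>" | "X2 \<epsilon> TyS = as2 \<epsilon>"

definition is_dtree :: "'v set \<Rightarrow> ('v \<times> 'v) set \<Rightarrow> bool" where
  "is_dtree V E \<longleftrightarrow>
     finite V \<and> V \<noteq> {} \<and> E \<subseteq> V \<times> V \<and>
     (\<forall>(a,b)\<in>E. a \<noteq> b \<and> (b,a) \<notin> E) \<and>
     (\<forall>a\<in>V. \<forall>b\<in>V. (a,b) \<in> (E \<union> E\<inverse>)\<^sup>*) \<and>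
     card E + 1 = card V"

definition abstract_path ::
  "'v set \<Rightarrow> ('v \<times> 'v) set \<Rightarrow> ('v \<Rightarrow> aedge) \<Rightarrow> ('v \<times> 'v \<Rightarrow> vtype) \<Rightarrow> bool" where
  "abstract_path V E \<tau> \<sigma> \<longleftrightarrow>
     is_dtree V E \<and>
     (\<forall>v\<in>V. valid_aedge (\<tau> v)) \<and>
     (\<forall>v\<in>V. \<forall>X. X1 (\<tau> v) X \<ge> card {e\<in>E. snd e = v \<and> \<sigma> e = X} \<and>
                 X2 (\<tau> v) X \<ge> card {e\<in>E. fst e = v \<and> \<sigma> e = X})"

definition path_end1 :: "'v set \<Rightarrow> ('v \<times> 'v) set \<Rightarrow> ('v \<Rightarrow> aedge) \<Rightarrow> ('v \<times> 'v \<Rightarrow> vtype) \<Rightarrow> vtype \<Rightarrow> int" where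
  "path_end1 V E \<tau> \<sigma> X = int (\<Sum>v\<in>V. X1 (\<tau> v) X) - int (card {e\<in>E. \<sigma> e = X})"

definition path_end2 :: "'v set \<Rightarrow> ('v \<times> 'v) set \<Rightarrow> ('v \<Rightarrow> aedge) \<Rightarrow> ('v \<times> 'v \<Rightarrow> vtype) \<Rightarrow> vtype \<Rightarrow> int" where
  "path_end2 V E \<tau> \<sigma> X = int (\<Sum>v\<in>V. X2 (\<tau> v) X) - int (card {e\<in>E. \<sigma> e = X})"

definition legal_path :: "'v set \<Rightarrow> ('v \<times> 'v) set \<Rightarrow> ('v \<Rightarrow> aedge) \<Rightarrow> ('v \<times> 'v \<Rightarrow> vtype) \<Rightarrow> bool" where
  "legal_path V E \<tau> \<sigma> \<longleftrightarrow> path_end1 V E \<tau> \<sigma> TyS = 0 \<and> path_end2 V E \<tau> \<sigma> TyU = 0"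

definition boundary_path :: "'v set \<Rightarrow> ('v \<Rightarrow> aedge) \<Rightarrow> bool" where
  "boundary_path V \<tau> \<longleftrightarrow> (\<forall>v\<in>V. amu (\<tau> v))"

definition path_weight :: "'v set \<Rightarrow> ('v \<Rightarrow> aedge) \<Rightarrow> int" where
  "path_weight V \<tau> = (\<Sum>v\<in>V. aedge_weight (\<tau> v))"

definition path_length :: "'v set \<Rightarrow> nat" where
  "path_length V = card V"

definition form_Ia :: "'v set \<Rightarrow> ('v \<times> 'v) set \<Rightarrow> ('v \<Rightarrow> aedge) \<Rightarrow> bool" where
  "form_Ia V E \<tau> \<longleftrightarrow> (\<exists>a b. a \<noteq> b \<and> V = {a, b} \<and> E = {(a, b)} \<and>
                              \<not> amu (\<tau> a) \<and> \<not> amu (\<tau> b))"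

definition form_Ib :: "'v set \<Rightarrow> ('v \<times> 'v) set \<Rightarrow> ('v \<Rightarrow> aedge) \<Rightarrow> bool" where
  "form_Ib V E \<tau> \<longleftrightarrow> (\<exists>v\<in>V. amu (\<tau> v) \<and>
      (\<forall>w\<in>V - {v}. \<not> amu (\<tau> w) \<and> ((v, w) \<in> E \<or> (w, v) \<in> E)))"

definition form_II :: "'v set \<Rightarrow> ('v \<times> 'v) set \<Rightarrow> ('v \<Rightarrow> aedge) \<Rightarrow> bool" where
  "form_II V E \<tau> \<longleftrightarrow> (\<exists>a b. a \<noteq> b \<and> V = {a, b} \<and> E = {(a, b)} \<and>
                              amu (\<tau> a) \<and> amu (\<tau> b))"

end

theory Submission
  imports Defs
begin

lemma card_ge1: "finite A \<Longrightarrow> x \<in> A \<Longrightarrow> P x \<Longrightarrow> 1 \<le> card {e\<in>A. P e}"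
proof -
  assume "finite A" "x \<in> A" "P x"
  hence "finite {e\<in>A. P e}" "{e\<in>A. P e} \<noteq> {}" by auto
  thus ?thesis by (simp add: Suc_le_eq card_gt_0_iff)
qed

lemma ap_facts:
  assumes "abstract_path V E \<tau> \<sigma>"
  shows "finite V" "finite E" "E \<subseteq> V \<times> V" "card E + 1 = card V"
    "\<And>v. v \<in> V \<Longrightarrow> valid_aedge (\<tau> v)"
    "\<And>v X. v \<in> V \<Longrightarrow> X1 (\<tau> v) X \<ge> card {e\<in>E. snd e = v \<and> \<sigma> e = X}"
    "\<And>v X. v \<in> V \<Longrightarrow> X2 (\<tau> v) X \<ge> card {e\<in>E. fst e = v \<and> \<sigma> e = X}"
    "\<And>a b. a \<in> V \<Longrightarrow> b \<in> V \<Longrightarrow> (a,b) \<in> (E \<union> E\<inverse>)\<^sup>*"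
    "\<And>a b. (a,b) \<in> E \<Longrightarrow> a \<noteq> b"
  using assms unfolding abstract_path_def is_dtree_def
  by (auto intro: finite_subset[of E "V \<times> V"])

lemma Eo_eq:
  assumes ap: "abstract_path V E \<tau> \<sigma>"
  shows "{e\<in>E. \<sigma> e = TyO} = {e\<in>E. \<not> amu (\<tau> (fst e)) \<and> \<not> amu (\<tau> (snd e))}"
proof (intro set_eqI iffI)
  note f = ap_facts[OF ap]
  fix e assume e: "e \<in> {e\<in>E. \<sigma> e = TyO}"
  obtain a b where ab: "e = (a,b)" by fastforce
  have ab': "a \<in> V" "b \<in> V" using e ab f(3) by auto
  have "1 \<le> card {e\<in>E. fst e = a \<and> \<sigma> e = TyO}"
    using card_ge1[OF f(2), of e "\<lambda>e. fst e = a \<and> \<sigma> e = TyO"] e ab by auto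
  also have "\<dots> \<le> ao2 (\<tau> a)" using f(7)[OF ab'(1), of TyO] by simp
  finally have 1: "\<not> amu (\<tau> a)" using f(5)[OF ab'(1)] unfolding valid_aedge_def by auto
  have "1 \<le> card {e\<in>E. snd e = b \<and> \<sigma> e = TyO}"
    using card_ge1[OF f(2), of e "\<lambda>e. snd e = b \<and> \<sigma> e = TyO"] e ab by auto
  also have "\<dots> \<le> ao1 (\<tau> b)" using f(6)[OF ab'(2), of TyO] by simp
  finally have 2: "\<not> amu (\<tau> b)" using f(5)[OF ab'(2)] unfolding valid_aedge_def by auto
  show "e \<in> {e\<in>E. \<not> amu (\<tau> (fst e)) \<and> \<not> amu (\<tau> (snd e))}" using 1 2 e ab by auto
next
  note f = ap_facts[OF ap]
  fix e assume e: "e \<in> {e\<in>E. \<not> amu (\<tau> (fst e)) \<and> \<not> amu (\<tau> (snd e))}"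
  obtain a b where ab: "e = (a,b)" by fastforce
  have ab': "a \<in> V" "b \<in> V" using e ab f(3) by auto
  have "\<sigma> e \<noteq> TyU"
  proof
    assume h: "\<sigma> e = TyU"
    have "1 \<le> card {e\<in>E. fst e = a \<and> \<sigma> e = TyU}"
      using card_ge1[OF f(2), of e "\<lambda>e. fst e = a \<and> \<sigma> e = TyU"] e ab h by auto
    also have "\<dots> \<le> au2 (\<tau> a)" using f(7)[OF ab'(1), of TyU] by simp
    finally show False using f(5)[OF ab'(1)] e ab unfolding valid_aedge_def by auto
  qed
  moreover have "\<sigma> e \<noteq> TyS"
  proof
    assume h: "\<sigma> e = TyS"
    have "1 \<le> card {e\<in>E. snd e = b \<and> \<sigma> e = TyS}"
      using card_ge1[OF f(2), of e "\<lambda>e. snd e = b \<and> \<sigma> e = TyS"] e ab h by auto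
    also have "\<dots> \<le> as1 (\<tau> b)" using f(6)[OF ab'(2), of TyS] by simp
    finally show False using f(5)[OF ab'(2)] e ab unfolding valid_aedge_def by auto
  qed
  ultimately show "e \<in> {e\<in>E. \<sigma> e = TyO}" using e by (cases "\<sigma> e") auto
qed

lemma weight_formula:
  assumes ap: "abstract_path V E \<tau> \<sigma>" and lg: "legal_path V E \<tau> \<sigma>"
  shows "path_weight V \<tau> = int (card {v\<in>V. amu (\<tau> v)}) + 1
           + int (card {e\<in>E. \<not> amu (\<tau> (fst e)) \<and> \<not> amu (\<tau> (snd e))})"
proof -
  note f = ap_facts[OF ap]
  have "path_weight V \<tau> = (\<Sum>v\<in>V. (if amu (\<tau> v) then 2 else 1) - int (as1 (\<tau> v)) - int (au2 (\<tau> v)))"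
    unfolding path_weight_def aedge_weight_def
    by (rule sum.cong) (use f(5) in \<open>auto simp: valid_aedge_def\<close>)
  also have "\<dots> = (\<Sum>v\<in>V. (if amu (\<tau> v) then 2 else 1)) - int (\<Sum>v\<in>V. as1 (\<tau> v)) - int (\<Sum>v\<in>V. au2 (\<tau> v))"
    by (simp add: sum_subtractf)
  also have "(\<Sum>v\<in>V. (if amu (\<tau> v) then 2 else 1::int)) = (\<Sum>v\<in>V. 1 + (if amu (\<tau> v) then 1 else 0))"
    by (rule sum.cong) auto
  also have "\<dots> = int (card V) + int (card {v\<in>V. amu (\<tau> v)})"
    by (simp add: sum.distrib sum.If_cases[OF f(1)] Int_def)
  also have "int (\<Sum>v\<in>V. as1 (\<tau> v)) = int (card {e\<in>E. \<sigma> e = TyS})"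
    using lg unfolding legal_path_def path_end1_def by simp
  also have "int (\<Sum>v\<in>V. au2 (\<tau> v)) = int (card {e\<in>E. \<sigma> e = TyU})"
    using lg unfolding legal_path_def path_end2_def by simp
  also have "card E = card {e\<in>E. \<sigma> e = TyO} + card {e\<in>E. \<sigma> e = TyU} + card {e\<in>E. \<sigma> e = TyS}"
  proof -
    have "E = ({e\<in>E. \<sigma> e = TyO} \<union> {e\<in>E. \<sigma> e = TyU}) \<union> {e\<in>E. \<sigma> e = TyS}"
      by (auto intro: vtype.exhaust)
    also have "card \<dots> = card {e\<in>E. \<sigma> e = TyO} + card {e\<in>E. \<sigma> e = TyU} + card {e\<in>E. \<sigma> e = TyS}"
      using f(2) by (simp add: card_Un_disjoint disjoint_iff)
    finally show ?thesis .
  qed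
  hence "int (card E) = int (card {e\<in>E. \<sigma> e = TyO}) + int (card {e\<in>E. \<sigma> e = TyU}) + int (card {e\<in>E. \<sigma> e = TyS})"
    by simp
  moreover have "int (card E) + 1 = int (card V)" using f(4) by linarith
  moreover have "card {e\<in>E. \<sigma> e = TyO} = card {e\<in>E. \<not> amu (\<tau> (fst e)) \<and> \<not> amu (\<tau> (snd e))}"
    using Eo_eq[OF ap] by simp
  ultimately show ?thesis by linarith
qed

lemma single_edge:
  assumes ap: "abstract_path V E \<tau> \<sigma>" and c: "card E = 1"
  shows "\<exists>x y. x \<noteq> y \<and> V = {x,y} \<and> E = {(x,y)}"
proof -
  note f = ap_facts[OF ap]
  obtain e where e: "E = {e}" using c card_1_singletonE by blast
  obtain x y where xy: "e = (x,y)" by fastforce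
  have "x \<noteq> y" using f(9)[of x y] e xy by auto
  moreover have "{x,y} \<subseteq> V" using f(3) e xy by auto
  moreover have "card V = 2" using f(4) c by simp
  ultimately have "V = {x,y}" using f(1)
    by (metis card_2_iff card_subset_eq)
  thus ?thesis using e xy \<open>x \<noteq> y\<close> by blast
qed

lemma star_no_ii:
  assumes ap: "abstract_path V E \<tau> \<sigma>" and v: "v \<in> V" "amu (\<tau> v)"
    and adj: "\<forall>w\<in>V - {v}. \<not> amu (\<tau> w) \<and> ((v, w) \<in> E \<or> (w, v) \<in> E)"
  shows "{e\<in>E. \<not> amu (\<tau> (fst e)) \<and> \<not> amu (\<tau> (snd e))} = {}"
proof (rule ccontr)
  note f = ap_facts[OF ap]
  assume "{e\<in>E. \<not> amu (\<tau> (fst e)) \<and> \<not> amu (\<tau> (snd e))} \<noteq> {}"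
  then obtain a b where ab: "(a,b) \<in> E" "\<not> amu (\<tau> a)" "\<not> amu (\<tau> b)" by auto
  define g where "g w = (if (v,w) \<in> E then (v,w) else (w,v))" for w
  have "inj_on g (V - {v})" unfolding inj_on_def g_def by auto
  moreover have "g ` (V - {v}) \<subseteq> E - {(a,b)}"
    using adj ab v unfolding g_def by auto
  ultimately have "card (V - {v}) \<le> card (E - {(a,b)})"
    using f(2) by (meson card_inj_on_le finite_Diff)
  moreover have "card (E - {(a,b)}) = card E - 1" using ab(1) f(2) by simp
  moreover have "card (V - {v}) = card V - 1" using v f(1) by simp
  moreover have "card E \<ge> 1" using ab(1) f(2) card_ge1[of E "(a,b)" "\<lambda>_. True"] by simp
  ultimately show False using f(4) by linarith
qed

theorem corollary3p11:
  fixes V :: "'v set" and E :: "('v \<times> 'v) set" and \<tau> :: "'v \<Rightarrow> aedge"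
    and \<sigma> :: "'v \<times> 'v \<Rightarrow> vtype"
  assumes "abstract_path V E \<tau> \<sigma>"
  shows "(legal_path V E \<tau> \<sigma> \<longrightarrow>
            (path_weight V \<tau> = 2 \<longleftrightarrow> form_Ia V E \<tau> \<or> form_Ib V E \<tau>)) \<and>
         (boundary_path V \<tau> \<longrightarrow>
            (path_length V = 2 \<longleftrightarrow> form_II V E \<tau>))"
proof (intro conjI impI)
  note ap = assms
  note f = ap_facts[OF ap]
  define B where "B = {v\<in>V. amu (\<tau> v)}"
  define Eii where "Eii = {e\<in>E. \<not> amu (\<tau> (fst e)) \<and> \<not> amu (\<tau> (snd e))}"
  have finB: "finite B" "finite Eii" using f(1,2) unfolding B_def Eii_def by auto
  assume lg: "legal_path V E \<tau> \<sigma>"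
  have wf: "path_weight V \<tau> = int (card B) + 1 + int (card Eii)"
    using weight_formula[OF ap lg] unfolding B_def Eii_def .
  show "path_weight V \<tau> = 2 \<longleftrightarrow> form_Ia V E \<tau> \<or> form_Ib V E \<tau>"
  proof
    assume "path_weight V \<tau> = 2"
    hence "card B + card Eii = 1" using wf by linarith
    hence "(card B = 0 \<and> card Eii = 1) \<or> (card B = 1 \<and> card Eii = 0)" by linarith
    thus "form_Ia V E \<tau> \<or> form_Ib V E \<tau>"
    proof
      assume h: "card B = 0 \<and> card Eii = 1"
      hence "B = {}" using finB by simp
      hence "Eii = E" using f(3) unfolding B_def Eii_def by fastforce
      hence "card E = 1" using h by simp
      then obtain x y where xy: "x \<noteq> y" "V = {x,y}" "E = {(x,y)}" using single_edge[OF ap] by blast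
      have "\<not> amu (\<tau> x)" "\<not> amu (\<tau> y)" using \<open>B = {}\<close> xy unfolding B_def by auto
      thus ?thesis unfolding form_Ia_def using xy by blast
    next
      assume h: "card B = 1 \<and> card Eii = 0"
      then obtain v where v: "B = {v}" using card_1_singletonE by blast
      have Eii0: "Eii = {}" using h finB by simp
      have vV: "v \<in> V" "amu (\<tau> v)" using v unfolding B_def by auto
      have "\<forall>w\<in>V - {v}. \<not> amu (\<tau> w) \<and> ((v, w) \<in> E \<or> (w, v) \<in> E)"
      proof
        fix w assume w: "w \<in> V - {v}"
        have nw: "\<not> amu (\<tau> w)" using w v unfolding B_def by auto
        have "(w, v) \<in> (E \<union> E\<inverse>)\<^sup>*" using f(8) w vV by auto
        then obtain y where y: "(w,y) \<in> E \<union> E\<inverse>" "(y,v) \<in> (E \<union> E\<inverse>)\<^sup>*"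
          using w by (metis DiffD2 converse_rtranclE singletonI)
        have yV: "y \<in> V" using y(1) f(3) by auto
        have "y = v"
        proof (rule ccontr)
          assume "y \<noteq> v"
          hence "\<not> amu (\<tau> y)" using yV v unfolding B_def by auto
          thus False using y(1) nw Eii0 unfolding Eii_def by auto
        qed
        thus "\<not> amu (\<tau> w) \<and> ((v, w) \<in> E \<or> (w, v) \<in> E)" using nw y(1) by auto
      qed
      thus ?thesis unfolding form_Ib_def using vV by blast
    qed
  next
    assume "form_Ia V E \<tau> \<or> form_Ib V E \<tau>"
    thus "path_weight V \<tau> = 2"
    proof
      assume "form_Ia V E \<tau>"
      then obtain a b where ab: "a \<noteq> b" "V = {a, b}" "\<not> amu (\<tau> a)" "\<not> amu (\<tau> b)"
        unfolding form_Ia_def by blast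
      thus ?thesis unfolding path_weight_def aedge_weight_def by simp
    next
      assume "form_Ib V E \<tau>"
      then obtain v where v: "v \<in> V" "amu (\<tau> v)"
        "\<forall>w\<in>V - {v}. \<not> amu (\<tau> w) \<and> ((v, w) \<in> E \<or> (w, v) \<in> E)"
        unfolding form_Ib_def by blast
      have "Eii = {}" using star_no_ii[OF ap v] unfolding Eii_def .
      moreover have "B = {v}" using v unfolding B_def by auto
      ultimately show ?thesis using wf by simp
    qed
  qed
next
  note ap = assms
  note f = ap_facts[OF ap]
  assume bd: "boundary_path V \<tau>"
  show "path_length V = 2 \<longleftrightarrow> form_II V E \<tau>"
  proof
    assume "path_length V = 2"
    hence "card E = 1" using f(4) unfolding path_length_def by simp
    then obtain x y where xy: "x \<noteq> y" "V = {x,y}" "E = {(x,y)}" using single_edge[OF ap] by blast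
    thus "form_II V E \<tau>" using bd unfolding form_II_def boundary_path_def by blast
  next
    assume "form_II V E \<tau>"
    thus "path_length V = 2" unfolding form_II_def path_length_def by auto
  qed
qed

end
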